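(* Let $G$ be a group and $S(X)=1$ a system of equations over $G$ which has a solution in $G$. For an arbitrary system $T(X,Y)=1$ over $G$ the following are equivalent: (1) $T(X,Y)=1$ is compatible with $S(X)=1$ and admits an $S$-lift over $G$; (2) $G_{R(S)}$ is a retract of $G_{R(S\cup T)}$, i.e. $G_{R(S)}$ is (canonically) a subgroup of $G_{R(S\cup T)}$ and there is a $G_{R(S)}$-homomorphism $G_{R(S\cup T)}\to G_{R(S)}$.
   Context: $G[Z]=G*F(Z)$; for a system $S$ in variables $Z$ over $G$, $R(S)$ is the intersection of the kernels of all $G$-homomorphisms $G[Z]\to G$ killing $S$ (or $G[Z]$ if none), and $G_{R(S)}=G[Z]/R(S)$; $\mu:X\to G_{R(S)}$ is the canonical map. $T=1$ is compatible with $S=1$ over $G$ if for every solution $U$ of $S=1$ in $G$, $T(U,Y)=1$ has a solution in $G$; it admits an $S$-lift if $T(X^\mu,Y)=1$ has a solution in $G_{R(S)}$. *)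

theory Defs
  imports "HOL-Algebra.Algebra"
begin

text \<open>Terms of the free product G[Z] = G * F(Z): words built from constants of G,
  variables, products, inverses and the identity.\<close>
datatype ('g, 'z) gterm =
    Const 'g
  | Var 'z
  | Mult "('g, 'z) gterm" "('g, 'z) gterm"
  | Inv "('g, 'z) gterm"
  | One

fun wf_term :: "('g, 'b) monoid_scheme \<Rightarrow> ('g, 'z) gterm \<Rightarrow> bool" where
  "wf_term G (Const g) = (g \<in> carrier G)"
| "wf_term G (Var z) = True"
| "wf_term G (Mult t u) = (wf_term G t \<and> wf_term G u)"
| "wf_term G (Inv t) = wf_term G t"
| "wf_term G One = True"

fun geval :: "('h, 'b) monoid_scheme \<Rightarrow> ('g \<Rightarrow> 'h) \<Rightarrow> ('z \<Rightarrow> 'h) \<Rightarrow> ('g, 'z) gterm \<Rightarrow> 'h" where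
  "geval H c a (Const g) = c g"
| "geval H c a (Var z) = a z"
| "geval H c a (Mult t u) = geval H c a t \<otimes>\<^bsub>H\<^esub> geval H c a u"
| "geval H c a (Inv t) = inv\<^bsub>H\<^esub> (geval H c a t)"
| "geval H c a One = \<one>\<^bsub>H\<^esub>"

text \<open>U is a solution in G of the system S (every G-homomorphism G[Z] \<rightarrow> G is
  evaluation at some assignment U of the variables).\<close>
definition is_solution :: "('g, 'b) monoid_scheme \<Rightarrow> ('g, 'z) gterm set \<Rightarrow> ('z \<Rightarrow> 'g) \<Rightarrow> bool" where
  "is_solution G S U \<longleftrightarrow> (\<forall>z. U z \<in> carrier G) \<and> (\<forall>s\<in>S. geval G id U s = \<one>\<^bsub>G\<^esub>)"

text \<open>The relation "t u^{-1} \<in> R(S)" on well-formed terms: R(S) is the intersection of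
  the kernels of all G-homomorphisms killing S (everything if there are none).\<close>
definition rad_rel :: "('g, 'b) monoid_scheme \<Rightarrow> ('g, 'z) gterm set \<Rightarrow> (('g, 'z) gterm \<times> ('g, 'z) gterm) set" where
  "rad_rel G S = {(t, u). wf_term G t \<and> wf_term G u \<and>
      (\<forall>U. is_solution G S U \<longrightarrow> geval G id U t = geval G id U u)}"

definition coord_group :: "('g, 'b) monoid_scheme \<Rightarrow> ('g, 'z) gterm set \<Rightarrow> ('g, 'z) gterm set monoid" where
  "coord_group G S =
     \<lparr> carrier = {t. wf_term G t} // rad_rel G S,
       monoid.mult = (\<lambda>A B. rad_rel G S `` {Mult (SOME t. t \<in> A) (SOME u. u \<in> B)}),
       monoid.one = rad_rel G S `` {One} \<rparr>"

definition cls :: "('g, 'b) monoid_scheme \<Rightarrow> ('g, 'z) gterm set \<Rightarrow> ('g, 'z) gterm \<Rightarrow> ('g, 'z) gterm set" where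
  "cls G S t = rad_rel G S `` {t}"

text \<open>The system S \<union> T in variables X \<union> Y (X = Inl, Y = Inr).\<close>
definition union_sys :: "('g, 'x) gterm set \<Rightarrow> ('g, 'x + 'y) gterm set \<Rightarrow> ('g, 'x + 'y) gterm set" where
  "union_sys S T = map_gterm id Inl ` S \<union> T"

definition canon_map :: "('g, 'b) monoid_scheme \<Rightarrow> ('g, 'x) gterm set \<Rightarrow> ('g, 'x + 'y) gterm set
     \<Rightarrow> ('g, 'x) gterm set \<Rightarrow> ('g, 'x + 'y) gterm set" where
  "canon_map G S T A = cls G (union_sys S T) (map_gterm id Inl (SOME t. t \<in> A))"

definition compatible :: "('g, 'b) monoid_scheme \<Rightarrow> ('g, 'x) gterm set \<Rightarrow> ('g, 'x + 'y) gterm set \<Rightarrow> bool" where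
  "compatible G S T \<longleftrightarrow>
     (\<forall>U. is_solution G S U \<longrightarrow>
        (\<exists>V. (\<forall>y. V y \<in> carrier G) \<and> (\<forall>t\<in>T. geval G id (case_sum U V) t = \<one>\<^bsub>G\<^esub>)))"

text \<open>T admits an S-lift: T(X^\<mu>, Y) = 1 has a solution in G_{R(S)}.\<close>
definition admits_lift :: "('g, 'b) monoid_scheme \<Rightarrow> ('g, 'x) gterm set \<Rightarrow> ('g, 'x + 'y) gterm set \<Rightarrow> bool" where
  "admits_lift G S T \<longleftrightarrow>
     (\<exists>W. (\<forall>y. W y \<in> carrier (coord_group G S)) \<and>
        (\<forall>t\<in>T. geval (coord_group G S) (\<lambda>g. cls G S (Const g))
                  (case_sum (\<lambda>x. cls G S (Var x)) W) t = \<one>\<^bsub>coord_group G S\<^esub>))"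

end

theory Submission
  imports Defs
begin

fun subst :: "('z \<Rightarrow> ('g,'w) gterm) \<Rightarrow> ('g,'z) gterm \<Rightarrow> ('g,'w) gterm" where
  "subst f (Const g) = Const g"
| "subst f (Var z) = f z"
| "subst f (Mult t u) = Mult (subst f t) (subst f u)"
| "subst f (Inv t) = Inv (subst f t)"
| "subst f One = One"

lemma geval_subst: "geval H c a (subst f t) = geval H c (\<lambda>z. geval H c a (f z)) t"
  by (induction t) auto

lemma wf_subst: "wf_term G t \<Longrightarrow> (\<And>z. wf_term G (f z)) \<Longrightarrow> wf_term G (subst f t)"
  by (induction t) auto

lemma geval_map: "geval H c a (map_gterm id f t) = geval H c (a \<circ> f) t"
  by (induction t) auto

lemma wf_map: "wf_term G (map_gterm id f t) = wf_term G t"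
  by (induction t) auto

lemma subst_map: "subst f (map_gterm id h t) = subst (f \<circ> h) t"
  by (induction t) auto

lemma subst_Var: "subst Var t = t" by (induction t) auto

lemma geval_cong: "wf_term G t \<Longrightarrow> (\<And>g. g \<in> carrier G \<Longrightarrow> c g = c' g) \<Longrightarrow> (\<And>z. a z = a' z)
   \<Longrightarrow> geval H c a t = geval H c' a' t"
  by (induction t) auto

lemma hom_geval:
  assumes "group H" "group K" "h \<in> hom H K" "wf_term G t"
    "\<And>g. g \<in> carrier G \<Longrightarrow> c g \<in> carrier H" "\<And>z. a z \<in> carrier H"
  shows "h (geval H c a t) = geval K (h \<circ> c) (h \<circ> a) t \<and> geval H c a t \<in> carrier H"
  using assms(4)
proof (induction t)
  have gh: "group_hom H K h" using assms(1-3) by (simp add: group_hom_axioms_def group_hom_def)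
  case (Mult t u) then show ?case using group_hom.hom_mult[OF gh] group.subgroup_self[OF assms(1)]
      by (auto intro: monoid.m_closed[OF group.is_monoid[OF assms(1)]])
next
  have gh: "group_hom H K h" using assms(1-3) by (simp add: group_hom_axioms_def group_hom_def)
  case (Inv t) then show ?case using group_hom.hom_inv[OF gh] by (auto intro: group.inv_closed[OF assms(1)])
next
  have gh: "group_hom H K h" using assms(1-3) by (simp add: group_hom_axioms_def group_hom_def)
  case One then show ?case using group_hom.hom_one[OF gh] by (auto intro: monoid.one_closed[OF group.is_monoid[OF assms(1)]])
qed (auto simp: assms)

definition lsub :: "('y \<Rightarrow> ('g,'x) gterm set) \<Rightarrow> 'x + 'y \<Rightarrow> ('g,'x) gterm" where
  "lsub W = case_sum Var (\<lambda>y. SOME r. r \<in> W y)"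

context group
begin

lemma geval_carrier: "wf_term G t \<Longrightarrow> (\<forall>z. a z \<in> carrier G) \<Longrightarrow> geval G id a t \<in> carrier G"
  by (induction t) auto

lemma rad_equiv: "equiv {t. wf_term G t} (rad_rel G S)"
proof (rule equivI)
  show "rad_rel G S \<subseteq> {t. wf_term G t} \<times> {t. wf_term G t}" by (auto simp: rad_rel_def)
  show "refl_on {t. wf_term G t} (rad_rel G S)" by (auto simp: refl_on_def rad_rel_def)
  show "sym (rad_rel G S)" unfolding sym_def rad_rel_def by simp
  show "trans (rad_rel G S)" unfolding trans_def rad_rel_def by simp
qed

lemma cls_in: "wf_term G t \<Longrightarrow> cls G S t \<in> carrier (coord_group G S)"
  unfolding cls_def coord_group_def by (auto intro: quotientI)

lemma carrier_cls: "A \<in> carrier (coord_group G S) \<Longrightarrow> \<exists>t. wf_term G t \<and> A = cls G S t"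
  unfolding cls_def coord_group_def by (auto elim: quotientE)

lemma cls_eq_iff: "wf_term G t \<Longrightarrow> wf_term G u \<Longrightarrow>
   cls G S t = cls G S u \<longleftrightarrow> (\<forall>U. is_solution G S U \<longrightarrow> geval G id U t = geval G id U u)"
  unfolding cls_def using eq_equiv_class_iff[OF rad_equiv, of t u S]
  by (auto simp: rad_rel_def)

lemma some_cls: "wf_term G t \<Longrightarrow> wf_term G (SOME s. s \<in> cls G S t) \<and>
   cls G S (SOME s. s \<in> cls G S t) = cls G S t"
proof -
  assume t: "wf_term G t"
  have "t \<in> cls G S t" unfolding cls_def using equiv_class_self[OF rad_equiv] t by auto
  then have "(SOME s. s \<in> cls G S t) \<in> cls G S t" by (rule someI)
  then have "(t, SOME s. s \<in> cls G S t) \<in> rad_rel G S" unfolding cls_def by auto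
  then have w: "wf_term G (SOME s. s \<in> cls G S t)"
    and e: "\<forall>U. is_solution G S U \<longrightarrow> geval G id U t = geval G id U (SOME s. s \<in> cls G S t)"
    unfolding rad_rel_def by auto
  have "cls G S (SOME s. s \<in> cls G S t) = cls G S t"
    using cls_eq_iff[OF w t] e by simp
  then show ?thesis using w by simp
qed

lemma sol_eval: "is_solution G S U \<Longrightarrow> wf_term G t \<Longrightarrow> geval G id U t \<in> carrier G"
  using geval_carrier unfolding is_solution_def by auto

lemma mult_cls: "wf_term G t \<Longrightarrow> wf_term G u \<Longrightarrow>
   cls G S t \<otimes>\<^bsub>coord_group G S\<^esub> cls G S u = cls G S (Mult t u)"
proof -
  assume t: "wf_term G t" and u: "wf_term G u"
  let ?a = "SOME s. s \<in> cls G S t" and ?b = "SOME s. s \<in> cls G S u"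
  have "cls G S t \<otimes>\<^bsub>coord_group G S\<^esub> cls G S u = cls G S (Mult ?a ?b)"
    unfolding coord_group_def cls_def by simp
  also have "\<dots> = cls G S (Mult t u)"
  proof -
    have a: "wf_term G ?a" "\<forall>U. is_solution G S U \<longrightarrow> geval G id U ?a = geval G id U t"
      using some_cls[OF t, of S] t cls_eq_iff by blast+
    have b: "wf_term G ?b" "\<forall>U. is_solution G S U \<longrightarrow> geval G id U ?b = geval G id U u"
      using some_cls[OF u, of S] u cls_eq_iff by blast+
    show ?thesis using a b t u by (simp add: cls_eq_iff)
  qed
  finally show ?thesis .
qed

lemma one_cls: "\<one>\<^bsub>coord_group G S\<^esub> = cls G S One"
  unfolding coord_group_def cls_def by simp

lemma coord_group: "group (coord_group G S)"
proof (rule groupI)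
  fix x y assume "x \<in> carrier (coord_group G S)" "y \<in> carrier (coord_group G S)"
  then show "x \<otimes>\<^bsub>coord_group G S\<^esub> y \<in> carrier (coord_group G S)"
  proof -
    obtain a b where "wf_term G a" "wf_term G b" "x = cls G S a" "y = cls G S b"
      by (metis carrier_cls \<open>x \<in> _\<close> \<open>y \<in> _\<close>)
    then show ?thesis by (simp add: mult_cls cls_in)
  qed
next
  show "\<one>\<^bsub>coord_group G S\<^esub> \<in> carrier (coord_group G S)" by (simp add: one_cls cls_in)
next
  fix x y z assume "x \<in> carrier (coord_group G S)" "y \<in> carrier (coord_group G S)" "z \<in> carrier (coord_group G S)"
  then obtain a b c where "wf_term G a" "wf_term G b" "wf_term G c" "x = cls G S a" "y = cls G S b" "z = cls G S c"
    by (metis carrier_cls)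
  then show "x \<otimes>\<^bsub>coord_group G S\<^esub> y \<otimes>\<^bsub>coord_group G S\<^esub> z = x \<otimes>\<^bsub>coord_group G S\<^esub> (y \<otimes>\<^bsub>coord_group G S\<^esub> z)"
    by (simp add: mult_cls cls_eq_iff) (auto simp: m_assoc sol_eval)
next
  fix x assume "x \<in> carrier (coord_group G S)"
  then obtain a where "wf_term G a" "x = cls G S a" by (metis carrier_cls)
  then show "\<one>\<^bsub>coord_group G S\<^esub> \<otimes>\<^bsub>coord_group G S\<^esub> x = x"
    by (simp add: one_cls mult_cls cls_eq_iff) (auto simp: sol_eval)
next
  fix x assume "x \<in> carrier (coord_group G S)"
  then obtain a where a: "wf_term G a" "x = cls G S a" by (metis carrier_cls)
  then have "cls G S (Inv a) \<otimes>\<^bsub>coord_group G S\<^esub> x = \<one>\<^bsub>coord_group G S\<^esub>"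
    by (simp add: one_cls mult_cls cls_eq_iff) (auto simp: sol_eval)
  then show "\<exists>y\<in>carrier (coord_group G S). y \<otimes>\<^bsub>coord_group G S\<^esub> x = \<one>\<^bsub>coord_group G S\<^esub>"
    using a cls_in[of "Inv a" S] by auto
qed

lemma inv_cls: "wf_term G t \<Longrightarrow> inv\<^bsub>coord_group G S\<^esub> (cls G S t) = cls G S (Inv t)"
  by (rule group.inv_equality[OF coord_group]) (simp_all add: one_cls mult_cls cls_eq_iff cls_in, auto simp: sol_eval)

lemma coord_geval: "wf_term G t \<Longrightarrow> (\<And>z. wf_term G (f z)) \<Longrightarrow>
  geval (coord_group G S) (\<lambda>g. cls G S (Const g)) (\<lambda>z. cls G S (f z)) t = cls G S (subst f t)"
  by (induction t) (auto simp: mult_cls wf_subst inv_cls one_cls)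


lemma sol_union: "is_solution G (union_sys S T) W \<longleftrightarrow>
   is_solution G S (W \<circ> Inl) \<and> (\<forall>y. W (Inr y) \<in> carrier G) \<and> (\<forall>t\<in>T. geval G id W t = \<one>)"
proof -
  have c1: "(\<forall>z. W z \<in> carrier G) \<longleftrightarrow> (\<forall>x. (W \<circ> Inl) x \<in> carrier G) \<and> (\<forall>y. W (Inr y) \<in> carrier G)"
    unfolding comp_apply by (rule split_sum_all)
  have c2: "(\<forall>s\<in>map_gterm id Inl ` S. geval G id W s = \<one>) \<longleftrightarrow> (\<forall>s\<in>S. geval G id (W \<circ> Inl) s = \<one>)"
    unfolding geval_map[symmetric] by blast
  show ?thesis unfolding is_solution_def union_sys_def ball_Un c1 c2 by blast
qed

lemma canon_cls: "wf_term G a \<Longrightarrow>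
  canon_map G S T (cls G S a) = cls G (union_sys S T) (map_gterm id Inl a)"
proof -
  assume a: "wf_term G a"
  let ?s = "SOME t. t \<in> cls G S a"
  have s: "wf_term G ?s" "cls G S ?s = cls G S a" using some_cls[OF a] by auto
  then have e: "\<forall>U. is_solution G S U \<longrightarrow> geval G id U ?s = geval G id U a"
    using cls_eq_iff[OF s(1) a] by simp
  have "cls G (union_sys S T) (map_gterm id Inl ?s) = cls G (union_sys S T) (map_gterm id Inl a)"
    using e s(1) a by (simp add: cls_eq_iff wf_map geval_map sol_union)
  then show ?thesis unfolding canon_map_def by simp
qed

lemma canon_hom: "canon_map G S T \<in> hom (coord_group G S) (coord_group G (union_sys S T))"
proof (rule homI)
  fix A assume "A \<in> carrier (coord_group G S)"
  then obtain a where "wf_term G a" "A = cls G S a" using carrier_cls by blast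
  then show "canon_map G S T A \<in> carrier (coord_group G (union_sys S T))"
    by (simp add: canon_cls cls_in wf_map)
next
  fix A B assume "A \<in> carrier (coord_group G S)" "B \<in> carrier (coord_group G S)"
  then obtain a b where "wf_term G a" "A = cls G S a" "wf_term G b" "B = cls G S b"
    using carrier_cls by metis
  then show "canon_map G S T (A \<otimes>\<^bsub>coord_group G S\<^esub> B) =
     canon_map G S T A \<otimes>\<^bsub>coord_group G (union_sys S T)\<^esub> canon_map G S T B"
    by (simp add: canon_cls mult_cls wf_map)
qed

lemma lsub_props:
  assumes "\<forall>y. W y \<in> carrier (coord_group G S)"
  shows "wf_term G (lsub W z)" "cls G S (lsub W z) = case_sum (\<lambda>x. cls G S (Var x)) W z"
proof -
  have "wf_term G (lsub W z) \<and> cls G S (lsub W z) = case_sum (\<lambda>x. cls G S (Var x)) W z"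
  proof (cases z)
    case (Inl x) then show ?thesis by (simp add: lsub_def)
  next
    case (Inr y)
    obtain t where "wf_term G t" "W y = cls G S t" using carrier_cls assms by blast
    then show ?thesis using some_cls[of t S] Inr by (simp add: lsub_def)
  qed
  then show "wf_term G (lsub W z)" "cls G S (lsub W z) = case_sum (\<lambda>x. cls G S (Var x)) W z" by auto
qed

lemma lift_sol:
  assumes W: "\<forall>y. W y \<in> carrier (coord_group G S)"
    "\<forall>t\<in>T. geval (coord_group G S) (\<lambda>g. cls G S (Const g))
                  (case_sum (\<lambda>x. cls G S (Var x)) W) t = \<one>\<^bsub>coord_group G S\<^esub>"
    and wfT: "\<forall>t\<in>T. wf_term G t" and U: "is_solution G S U"
  shows "is_solution G (union_sys S T) (\<lambda>z. geval G id U (lsub W z))"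
proof -
  have cmp: "(\<lambda>z. geval G id U (lsub W z)) \<circ> Inl = U" by (auto simp: lsub_def)
  have car: "\<forall>y. geval G id U (lsub W (Inr y)) \<in> carrier G"
    using sol_eval[OF U] lsub_props(1)[OF W(1)] by blast
  have T: "geval G id (\<lambda>z. geval G id U (lsub W z)) t = \<one>" if t: "t \<in> T" for t
  proof -
    have fe: "(\<lambda>z. cls G S (lsub W z)) = case_sum (\<lambda>x. cls G S (Var x)) W"
      using lsub_props(2)[OF W(1)] by auto
    have "cls G S (subst (lsub W) t) = geval (coord_group G S) (\<lambda>g. cls G S (Const g)) (\<lambda>z. cls G S (lsub W z)) t"
      using coord_geval[where t=t and f="lsub W" and S=S] wfT t lsub_props(1)[OF W(1)] by simp
    also have "\<dots> = cls G S One" using W(2) t fe one_cls by simp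
    finally have "cls G S (subst (lsub W) t) = cls G S One" .
    then have "geval G id U (subst (lsub W) t) = \<one>"
      using cls_eq_iff[where t="subst (lsub W) t" and u=One and S=S] wf_subst[where G=G and t=t and f="lsub W"] wfT t lsub_props(1)[OF W(1)] U
      by auto
    then show ?thesis by (simp add: geval_subst)
  qed
  show ?thesis unfolding sol_union using cmp car T U by auto
qed

lemma lift_compat: "admits_lift G S T \<Longrightarrow> \<forall>t\<in>T. wf_term G t \<Longrightarrow> compatible G S T"
  unfolding admits_lift_def compatible_def
proof (elim exE conjE, intro allI impI)
  fix W U assume W: "\<forall>y. W y \<in> carrier (coord_group G S)"
    "\<forall>t\<in>T. geval (coord_group G S) (\<lambda>g. cls G S (Const g))
                  (case_sum (\<lambda>x. cls G S (Var x)) W) t = \<one>\<^bsub>coord_group G S\<^esub>"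
    and wfT: "\<forall>t\<in>T. wf_term G t" and U: "is_solution G S U"
  have s: "is_solution G (union_sys S T) (\<lambda>z. geval G id U (lsub W z))"
    by (rule lift_sol[OF W wfT U])
  have e: "(\<lambda>z. geval G id U (lsub W z)) = case_sum U (\<lambda>y. geval G id U (lsub W (Inr y)))"
    by (rule ext) (auto simp: lsub_def split: sum.split)
  show "\<exists>V. (\<forall>y. V y \<in> carrier G) \<and> (\<forall>t\<in>T. geval G id (case_sum U V) t = \<one>)"
    using s unfolding sol_union e by auto
qed

end

theorem mainTheorem9:
  fixes G :: "('g, 'b) monoid_scheme"
    and S :: "('g, 'x) gterm set"
    and T :: "('g, 'x + 'y) gterm set"
  assumes "group G"
    and "\<forall>s\<in>S. wf_term G s"
    and "\<forall>t\<in>T. wf_term G t"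
    and "\<exists>U. is_solution G S U"
  shows "(compatible G S T \<and> admits_lift G S T) \<longleftrightarrow>
         (canon_map G S T \<in> hom (coord_group G S) (coord_group G (union_sys S T)) \<and>
          inj_on (canon_map G S T) (carrier (coord_group G S)) \<and>
          (\<exists>\<phi> \<in> hom (coord_group G (union_sys S T)) (coord_group G S).
             \<forall>A \<in> carrier (coord_group G S). \<phi> (canon_map G S T A) = A))"
proof -
  interpret G: group G by fact
  let ?S' = "union_sys S T"
  let ?CS = "coord_group G S" and ?CT = "coord_group G ?S'"
  have gCS: "group ?CS" and gCT: "group ?CT" by (rule G.coord_group)+
  have hom: "canon_map G S T \<in> hom ?CS ?CT" by (rule G.canon_hom)
  show ?thesis
  proof
    assume "compatible G S T \<and> admits_lift G S T"
    then have comp: "compatible G S T" and lift: "admits_lift G S T" by auto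
    obtain W where W: "\<forall>y. W y \<in> carrier ?CS"
      "\<forall>t\<in>T. geval ?CS (\<lambda>g. cls G S (Const g)) (case_sum (\<lambda>x. cls G S (Var x)) W) t = \<one>\<^bsub>?CS\<^esub>"
      using lift unfolding admits_lift_def by blast
    have inj: "inj_on (canon_map G S T) (carrier ?CS)"
    proof (rule inj_onI)
      fix A B assume A: "A \<in> carrier ?CS" and B: "B \<in> carrier ?CS"
        and eq: "canon_map G S T A = canon_map G S T B"
      obtain a b where ab: "wf_term G a" "A = cls G S a" "wf_term G b" "B = cls G S b"
        using A B G.carrier_cls by metis
      have e: "\<forall>W'. is_solution G ?S' W' \<longrightarrow>
          geval G id W' (map_gterm id Inl a) = geval G id W' (map_gterm id Inl b)"
        using eq ab G.canon_cls G.cls_eq_iff wf_map by metis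
      have "\<forall>U. is_solution G S U \<longrightarrow> geval G id U a = geval G id U b"
      proof (intro allI impI)
        fix U assume U: "is_solution G S U"
        then obtain V where V: "\<forall>y. V y \<in> carrier G" "\<forall>t\<in>T. geval G id (case_sum U V) t = \<one>\<^bsub>G\<^esub>"
          using comp unfolding compatible_def by blast
        have c: "case_sum U V \<circ> Inl = U" by auto
        have "is_solution G ?S' (case_sum U V)" unfolding G.sol_union c using U V by auto
        then show "geval G id U a = geval G id U b" using e[rule_format, of "case_sum U V"] by (simp add: geval_map c)
      qed
      then show "A = B" using ab G.cls_eq_iff by metis
    qed
    define phi where "phi B = cls G S (subst (lsub W) (SOME t. t \<in> B))" for B
    have wfl: "\<And>z. wf_term G (lsub W z)" using G.lsub_props(1)[OF W(1)] .
    have phic: "phi (cls G ?S' t) = cls G S (subst (lsub W) t)" if t: "wf_term G t" for t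
    proof -
      let ?t0 = "SOME s. s \<in> cls G ?S' t"
      have t0: "wf_term G ?t0" "cls G ?S' ?t0 = cls G ?S' t" using G.some_cls[OF t] by auto
      then have e: "\<forall>W'. is_solution G ?S' W' \<longrightarrow> geval G id W' ?t0 = geval G id W' t"
        using G.cls_eq_iff[OF t0(1) t] by simp
      have w0: "wf_term G (subst (lsub W) ?t0)" "wf_term G (subst (lsub W) t)"
        using wf_subst wfl t0(1) t by blast+
      have "cls G S (subst (lsub W) ?t0) = cls G S (subst (lsub W) t)"
        unfolding G.cls_eq_iff[OF w0]
      proof (intro allI impI)
        fix U assume U: "is_solution G S U"
        have "is_solution G ?S' (\<lambda>z. geval G id U (lsub W z))"
          by (rule G.lift_sol[OF W assms(3) U])
        then show "geval G id U (subst (lsub W) ?t0) = geval G id U (subst (lsub W) t)"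
          using e by (simp add: geval_subst)
      qed
      then show ?thesis unfolding phi_def cls_def by simp
    qed
    have phihom: "phi \<in> hom ?CT ?CS"
    proof (rule homI)
      fix A assume "A \<in> carrier ?CT"
      then obtain a where "wf_term G a" "A = cls G ?S' a" using G.carrier_cls by blast
      then show "phi A \<in> carrier ?CS" using phic G.cls_in wf_subst wfl by metis
    next
      fix A B assume "A \<in> carrier ?CT" "B \<in> carrier ?CT"
      then obtain a b where "wf_term G a" "A = cls G ?S' a" "wf_term G b" "B = cls G ?S' b"
        using G.carrier_cls by metis
      then show "phi (A \<otimes>\<^bsub>?CT\<^esub> B) = phi A \<otimes>\<^bsub>?CS\<^esub> phi B"
        by (simp add: phic G.mult_cls wf_subst wfl)
    qed
    have lI: "lsub W \<circ> Inl = Var" by (auto simp: lsub_def)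
    have retr: "\<forall>A\<in>carrier ?CS. phi (canon_map G S T A) = A"
    proof
      fix A assume "A \<in> carrier ?CS"
      then obtain a where a: "wf_term G a" "A = cls G S a" using G.carrier_cls by blast
      then show "phi (canon_map G S T A) = A"
        by (simp add: G.canon_cls phic wf_map subst_map lI subst_Var)
    qed
    show "canon_map G S T \<in> hom ?CS ?CT \<and> inj_on (canon_map G S T) (carrier ?CS) \<and>
      (\<exists>\<phi>\<in>hom ?CT ?CS. \<forall>A\<in>carrier ?CS. \<phi> (canon_map G S T A) = A)"
      using hom inj phihom retr by blast
  next
    assume "canon_map G S T \<in> hom ?CS ?CT \<and> inj_on (canon_map G S T) (carrier ?CS) \<and>
      (\<exists>\<phi>\<in>hom ?CT ?CS. \<forall>A\<in>carrier ?CS. \<phi> (canon_map G S T A) = A)"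
    then obtain phi where phi: "phi \<in> hom ?CT ?CS" "\<forall>A\<in>carrier ?CS. phi (canon_map G S T A) = A"
      by blast
    have gh: "group_hom ?CT ?CS phi" using gCT gCS phi(1) by (simp add: group_hom_axioms_def group_hom_def)
    define W where "W y = phi (cls G ?S' (Var (Inr y)))" for y
    have Wc: "\<forall>y. W y \<in> carrier ?CS"
    proof
      fix y have "cls G ?S' (Var (Inr y)) \<in> carrier ?CT" by (rule G.cls_in) simp
      then show "W y \<in> carrier ?CS" using phi(1) unfolding W_def hom_def by auto
    qed
    have lift: "admits_lift G S T"
      unfolding admits_lift_def
    proof (intro exI conjI ballI)
      show "\<forall>y. W y \<in> carrier ?CS" by (rule Wc)
      fix t assume tT: "t \<in> T"
      have wt: "wf_term G t" using assms(3) tT by blast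
      have "\<forall>W'. is_solution G ?S' W' \<longrightarrow> geval G id W' t = geval G id W' One"
        using tT unfolding is_solution_def union_sys_def by auto
      then have "cls G ?S' t = cls G ?S' One"
        using G.cls_eq_iff[where t=t and u=One and S="?S'"] wt by simp
      then have one: "phi (cls G ?S' t) = \<one>\<^bsub>?CS\<^esub>"
        using group_hom.hom_one[OF gh] G.one_cls by metis
      have ev: "geval ?CT (\<lambda>g. cls G ?S' (Const g)) (\<lambda>z. cls G ?S' (Var z)) t = cls G ?S' t"
        using G.coord_geval[where t=t and f=Var and S="?S'"] wt by (simp add: subst_Var)
      have hg: "phi (geval ?CT (\<lambda>g. cls G ?S' (Const g)) (\<lambda>z. cls G ?S' (Var z)) t) =
          geval ?CS (phi \<circ> (\<lambda>g. cls G ?S' (Const g))) (phi \<circ> (\<lambda>z. cls G ?S' (Var z))) t"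
        using hom_geval[OF gCT gCS phi(1) wt, of "\<lambda>g. cls G ?S' (Const g)" "\<lambda>z. cls G ?S' (Var z)"]
          G.cls_in[where S="?S'"] by force
      have "geval ?CS (phi \<circ> (\<lambda>g. cls G ?S' (Const g))) (phi \<circ> (\<lambda>z. cls G ?S' (Var z))) t =
          geval ?CS (\<lambda>g. cls G S (Const g)) (case_sum (\<lambda>x. cls G S (Var x)) W) t"
      proof (rule geval_cong[OF wt])
        fix g assume g: "g \<in> carrier G"
        have "cls G ?S' (Const g) = canon_map G S T (cls G S (Const g))"
          using G.canon_cls[where a="Const g" and S=S and T=T] g by simp
        moreover have "cls G S (Const g) \<in> carrier ?CS" by (rule G.cls_in) (simp add: g)
        ultimately show "(phi \<circ> (\<lambda>g. cls G ?S' (Const g))) g = cls G S (Const g)"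
          using phi(2) by simp
      next
        fix z show "(phi \<circ> (\<lambda>z. cls G ?S' (Var z))) z = case_sum (\<lambda>x. cls G S (Var x)) W z"
        proof (cases z)
          case (Inl x)
          have "cls G ?S' (Var z) = canon_map G S T (cls G S (Var x))"
            using G.canon_cls[where a="Var x" and S=S and T=T] Inl by simp
          moreover have "cls G S (Var x) \<in> carrier ?CS" by (rule G.cls_in) simp
          ultimately show ?thesis using phi(2) Inl by simp
        next
          case (Inr y) then show ?thesis by (simp add: W_def)
        qed
      qed
      then show "geval ?CS (\<lambda>g. cls G S (Const g)) (case_sum (\<lambda>x. cls G S (Var x)) W) t = \<one>\<^bsub>?CS\<^esub>"
        using one ev hg by simp
    qed
    have comp: "compatible G S T" by (rule G.lift_compat[OF lift assms(3)])
    show "compatible G S T \<and> admits_lift G S T" using comp lift by blast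
  qed
qed

end
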